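(* Let $n\ge1$, $D\ge1$, $r=\lceil\sqrt n\rceil$, and let $X_n=\{\mathbf{x}^0,\ldots,\mathbf{x}^{n-1}\}\subseteq\{0,1\}^D$ consist of $n$ pairwise distinct vectors, indexed so that $\mathbf{a}\cdot\mathbf{x}^0<\cdots<\mathbf{a}\cdot\mathbf{x}^{n-1}$ for some $\mathbf{a}\in\mathbb{Z}^D$. Then there is a five-layer Boolean threshold network with layer sizes $D$, $r+D$, $2r$, $rD$, $D$ that is a perfect autoencoder for $X_n$, with the third layer (of size $2r$) as middle layer.
   Context: A Boolean threshold function is a map $\{0,1\}^h\to\{0,1\}$, $\mathbf{u}\mapsto[\mathbf{w}\cdot\mathbf{u}\ge\theta]$ (value $1$ iff $\mathbf{w}\cdot\mathbf{u}\ge\theta$) with $\mathbf{w}\in\mathbb{Z}^h,\theta\in\mathbb{Z}$. An $L$-layer Boolean threshold network has layers $1,\ldots,L$; layer $1$ is the input; each node of layer $t+1$ computes a Boolean threshold function of the values of layer $t$. If layer $k$ is designated the middle layer, the encoder $\mathbf{f}$ is the map from layer $1$ values to layer $k$ values and the decoder $\mathbf{g}$ the map from layer $k$ values to layer $L$ values; the network is a perfect autoencoder for $X_n$ if $\mathbf{g}(\mathbf{f}(\mathbf{x}^i))=\mathbf{x}^i$ for all $i$. *)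

theory Defs
  imports Complex_Main
begin

text \<open>Boolean vectors in {0,1}^h are represented as bool lists of length h;
  True stands for 1 and False for 0.\<close>

definition bit :: "bool \<Rightarrow> int" where
  "bit b = (if b then 1 else 0)"

definition bdot :: "(nat \<Rightarrow> int) \<Rightarrow> bool list \<Rightarrow> int" where
  "bdot w u = (\<Sum>i<length u. w i * bit (u ! i))"

definition threshold_fn :: "(nat \<Rightarrow> int) \<Rightarrow> int \<Rightarrow> bool list \<Rightarrow> bool" where
  "threshold_fn w \<theta> u = (bdot w u \<ge> \<theta>)"

text \<open>A layer transition: (W, \<Theta>, m) maps the previous layer to m nodes, node j
  computing the threshold function with weight vector W j and threshold \<Theta> j.\<close>
type_synonym layer = "(nat \<Rightarrow> nat \<Rightarrow> int) \<times> (nat \<Rightarrow> int) \<times> nat"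

definition layer_size :: "layer \<Rightarrow> nat" where
  "layer_size l = snd (snd l)"

definition apply_layer :: "layer \<Rightarrow> bool list \<Rightarrow> bool list" where
  "apply_layer l u = (case l of (W, \<Theta>, m) \<Rightarrow> map (\<lambda>j. threshold_fn (W j) (\<Theta> j) u) [0..<m])"

text \<open>A network with L layers is given by the list of its L-1 transitions;
  layer 1 is the input.  Evaluating a list of transitions:\<close>
definition net_eval :: "layer list \<Rightarrow> bool list \<Rightarrow> bool list" where
  "net_eval N u = fold apply_layer N u"

text \<open>With layer k (1-based) as middle layer, the encoder consists of the first k-1
  transitions and the decoder of the remaining ones.\<close>
definition encoder :: "layer list \<Rightarrow> nat \<Rightarrow> bool list \<Rightarrow> bool list" where
  "encoder N k = net_eval (take (k - 1) N)"

definition decoder :: "layer list \<Rightarrow> nat \<Rightarrow> bool list \<Rightarrow> bool list" where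
  "decoder N k = net_eval (drop (k - 1) N)"

definition perfect_autoencoder :: "layer list \<Rightarrow> nat \<Rightarrow> bool list set \<Rightarrow> bool" where
  "perfect_autoencoder N k X = (\<forall>x\<in>X. decoder N k (encoder N k x) = x)"

end

theory Submission
  imports Defs
begin

lemma sum_split_add: "(\<Sum>i<a+(b::nat). f i) = (\<Sum>i<a. f i) + (\<Sum>k<b. f (a+k) :: int)"
  by (induction b) auto
lemma bdot_append: "bdot w (u @ v) = bdot w u + bdot (\<lambda>k. w (length u + k)) v"
  unfolding bdot_def by (simp add: sum_split_add nth_append)
lemma bdot_map: "bdot w (map f [0..<k]) = (\<Sum>j<k. w j * bit (f j))"
  unfolding bdot_def by simp
lemma bdot_unit: "bdot (\<lambda>m. if m = k then 1 else 0) u = (if k < length u then bit (u!k) else 0)"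
proof -
  have "\<And>i. (if i = k then 1 else 0) * bit (u!i) = (if i = k then bit (u!k) else (0::int))" by simp
  then show ?thesis unfolding bdot_def by simp
qed
lemma bdot_zero: "bdot (\<lambda>m. 0) u = 0"
  unfolding bdot_def by simp
lemma tel1: "(\<Sum>m<Suc P. (if 0<m then g(m-1) - g m else 0)) = (g 0 - g P :: int)"
  by (induction P) auto
lemma tel2: "(\<Sum>k<Suc s. h k - (if k=0 then 0 else h(k-1))) = (h s :: int)"
  by (induction s) auto
lemma divI: "(0::nat) < r \<Longrightarrow> (p*r \<le> i \<and> i < Suc p * r) = (i div r = p)"
  by (metis div_less_iff_less_mult div_times_less_eq_dividend le_less_Suc_eq
    less_eq_div_iff_mult_less_eq)
lemma sum_le_filter: "P < (r::nat) \<Longrightarrow> (\<Sum>m<r. (if m \<le> P then g m else 0)) = (\<Sum>m<Suc P. g m :: int)"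
proof -
  assume "P < r"
  then have "{m\<in>{..<r}. m \<le> P} = {..<Suc P}" by auto
  then show ?thesis by (simp add: sum.inter_filter[symmetric])
qed

theorem theorem19:
  fixes n D r :: nat and xs :: "nat \<Rightarrow> bool list" and a :: "nat \<Rightarrow> int"
  assumes "n \<ge> 1" and "D \<ge> 1"
    and "r = nat \<lceil>sqrt (real n)\<rceil>"
    and "\<forall>i<n. length (xs i) = D"
    and "inj_on xs {..<n}"
    and "\<forall>i j. i < j \<and> j < n \<longrightarrow> bdot a (xs i) < bdot a (xs j)"
  shows "\<exists>N :: layer list. map layer_size N = [r + D, 2 * r, r * D, D]
           \<and> perfect_autoencoder N 3 (xs ` {..<n})"
proof -
  have nr: "n \<le> r * r"
  proof -
    have "real n = sqrt (real n) * sqrt (real n)" by simp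
    also have "\<dots> \<le> real_of_int \<lceil>sqrt (real n)\<rceil> * real_of_int \<lceil>sqrt (real n)\<rceil>"
      by (rule mult_mono) (auto intro: less_le_trans[of _ 0])
    also have "\<dots> = real (r * r)" using assms(3) by simp
    finally show ?thesis by linarith
  qed
  have r0: "0 < r" using nr assms(1) by (cases r) auto
  define t where "t = (\<lambda>j. bdot a (xs j))"
  define T where "T = (\<lambda>j. if j < n then t j else t (n-1) + int (j - (n-1)))"
  have Tmono: "strict_mono T"
    unfolding strict_mono_Suc_iff
  proof
    fix j
    show "T j < T (Suc j)"
    proof (cases "Suc j < n")
      case True then show ?thesis using assms(6) by (simp add: T_def t_def)
    next
      case False
      show ?thesis
      proof (cases "j < n")
        case True
        then have "n - 1 = j" using False by simp
        then show ?thesis using True False by (simp add: T_def t_def)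
      qed (use False in \<open>simp add: T_def\<close>)
    qed
  qed
  have Tle: "(T j \<le> t i) = (j \<le> i)" if "i < n" for i j
  proof -
    have "T i = t i" using that by (simp add: T_def)
    then show ?thesis using strict_mono_less_eq[OF Tmono] by metis
  qed
  have iP: "i div r < r" if "i < n" for i
    using that nr r0 by (simp add: div_less_iff_less_mult)
  define c where "c = (\<lambda>p q d. bit (xs (p*r+q) ! d))"
  define W1 where "W1 = (\<lambda>j::nat. if j < r then a else (\<lambda>m. if m = j - r then 1 else 0))"
  define Th1 where "Th1 = (\<lambda>j::nat. if j < r then T (j*r) else 1)"
  define W2 where "W2 = (\<lambda>p m. if p < r then (if m = p then 1 else if m = Suc p \<and> Suc p < r then -1 else 0)
      else (if m < r then (if 0 < m then T ((m-1)*r + (p-r)) - T (m*r + (p-r)) else 0) else a (m - r)))"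
  define Th2 where "Th2 = (\<lambda>p. if p < r then 1 else T (p - r))"
  define W3 where "W3 = (\<lambda>j m. if m < r then (if m = j div D then 2 else 0)
      else (c (j div D) (m-r) (j mod D) - (if m - r = 0 then 0 else c (j div D) (m-r-1) (j mod D))))"
  define Th3 where "Th3 = (\<lambda>j::nat. 3::int)"
  define W4 where "W4 = (\<lambda>d j::nat. if j mod D = d then 1 else (0::int))"
  define Th4 where "Th4 = (\<lambda>j::nat. 1::int)"
  define G where "G = (\<lambda>i. map (\<lambda>k. k*r \<le> i) [0..<r])"
  define M where "M = (\<lambda>i. map (\<lambda>p. p = i div r) [0..<r] @ map (\<lambda>q. q \<le> i mod r) [0..<r])"
  define H where "H = (\<lambda>i. map (\<lambda>j. j div D = i div r \<and> xs i ! (j mod D)) [0..<r*D])"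
  have L1: "apply_layer (W1, Th1, r + D) (xs i) = G i @ xs i" if "i < n" for i
  proof (rule nth_equalityI)
    show "length (apply_layer (W1, Th1, r + D) (xs i)) = length (G i @ xs i)"
      using that assms(4) by (simp add: apply_layer_def G_def)
    fix j assume "j < length (apply_layer (W1, Th1, r + D) (xs i))"
    then have j: "j < r + D" by (simp add: apply_layer_def)
    show "apply_layer (W1, Th1, r + D) (xs i) ! j = (G i @ xs i) ! j"
    proof (cases "j < r")
      case True
      then show ?thesis using j Tle[OF that, of "j*r"]
        by (simp add: apply_layer_def G_def nth_append threshold_fn_def W1_def Th1_def t_def del: upt_Suc)
    next
      case False
      have "j - r < D" using j False by simp
      then show ?thesis using j that assms(4) False
        by (simp add: apply_layer_def G_def nth_append threshold_fn_def W1_def Th1_def bdot_unit bit_def del: upt_Suc)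
    qed
  qed
  have lenG: "length (G i) = r" for i by (simp add: G_def)
  have L2: "apply_layer (W2, Th2, 2 * r) (G i @ xs i) = M i" if "i < n" for i
  proof (rule nth_equalityI)
    show "length (apply_layer (W2, Th2, 2 * r) (G i @ xs i)) = length (M i)"
      by (simp add: apply_layer_def M_def)
    fix p assume "p < length (apply_layer (W2, Th2, 2 * r) (G i @ xs i))"
    then have p: "p < 2 * r" by (simp add: apply_layer_def)
    have ir: "i < r * r" using that nr by simp
    define P where "P = i div r"
    have PL: "P < r" using iP[OF that] by (simp add: P_def)
    have bsplit: "bdot (W2 p) (G i @ xs i) = (\<Sum>m<r. W2 p m * bit (m*r \<le> i)) + bdot (\<lambda>k. W2 p (r + k)) (xs i)"
      by (simp add: bdot_append lenG) (simp add: G_def bdot_map)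
    have lhs: "apply_layer (W2, Th2, 2 * r) (G i @ xs i) ! p = (bdot (W2 p) (G i @ xs i) \<ge> Th2 p)"
      using p by (simp add: apply_layer_def threshold_fn_def del: upt_Suc)
    show "apply_layer (W2, Th2, 2 * r) (G i @ xs i) ! p = M i ! p"
    proof (cases "p < r")
      case True
      have z: "(\<lambda>k. W2 p (r + k)) = (\<lambda>k. 0)" using True by (auto simp: W2_def)
      have sm: "W2 p m * bit (m*r \<le> i) = (if m = p then bit (p*r \<le> i) else 0)
           - (if m = Suc p then (if Suc p < r then bit (Suc p*r \<le> i) else 0) else 0)" for m
        using True by (simp add: W2_def)
      have "(\<Sum>m<r. W2 p m * bit (m*r \<le> i)) = bit (p*r \<le> i) - (if Suc p < r then bit (Suc p*r \<le> i) else 0)"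
        unfolding sm sum_subtractf using True by (simp add: sum.delta)
      then have "bdot (W2 p) (G i @ xs i) = bit (p*r \<le> i) - (if Suc p < r then bit (Suc p*r \<le> i) else 0)"
        using bsplit z by (simp add: bdot_zero)
      moreover have "M i ! p = (p = i div r)" using True by (simp add: M_def nth_append)
      moreover have "(p = i div r) = (p*r \<le> i \<and> i < Suc p * r)" using divI[OF r0] by metis
      moreover have "\<not> Suc p < r \<Longrightarrow> i < Suc p * r" using ir True
        by (metis Suc_lessI)
      ultimately show ?thesis using lhs True
        by (auto simp: Th2_def bit_def not_le)
    next
      case False
      define q where "q = p - r"
      have z: "(\<lambda>k. W2 p (r + k)) = a" using False by (auto simp: W2_def)
      have sm: "W2 p m * bit (m*r \<le> i) = (if m \<le> P then (if 0<m then T ((m-1)*r+q) - T (m*r+q) else 0) else 0)" if "m < r" for m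
        using False that r0 by (simp add: W2_def q_def P_def less_eq_div_iff_mult_less_eq bit_def)
      have "(\<Sum>m<r. W2 p m * bit (m*r \<le> i)) = (\<Sum>m<r. (if m \<le> P then (if 0<m then T ((m-1)*r+q) - T (m*r+q) else 0) else 0))"
        using sm by (intro sum.cong) auto
      also have "\<dots> = T q - T (P*r+q)"
        using sum_le_filter[OF PL] tel1[where P=P and g="\<lambda>m. T (m*r+q)"] by simp
      finally have "bdot (W2 p) (G i @ xs i) = T q - T (P*r+q) + t i"
        using bsplit z by (simp add: t_def)
      moreover have "M i ! p = (q \<le> i mod r)"
      proof -
        have "p - r < r" using False p by simp
        then show ?thesis using False by (simp add: M_def nth_append q_def del: upt_Suc)
      qed
      moreover have "(P*r+q \<le> i) = (q \<le> i mod r)"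
        using div_mult_mod_eq[of i r] unfolding P_def by linarith
      ultimately show ?thesis using lhs False Tle[OF that, of "P*r+q"]
        by (simp add: Th2_def q_def)
    qed
  qed
  have D0: "0 < D" using assms(2) by simp
  have L3: "apply_layer (W3, Th3, r * D) (M i) = H i" if "i < n" for i
  proof (rule nth_equalityI)
    show "length (apply_layer (W3, Th3, r * D) (M i)) = length (H i)"
      by (simp add: apply_layer_def H_def)
    fix j assume "j < length (apply_layer (W3, Th3, r * D) (M i))"
    then have j: "j < r * D" by (simp add: apply_layer_def)
    define P where "P = i div r"
    define s where "s = i mod r"
    define pj where "pj = j div D"
    define d where "d = j mod D"
    have PL: "P < r" using iP[OF that] by (simp add: P_def)
    have sL: "s < r" using r0 by (simp add: s_def)
    have pjL: "pj < r" using j D0 by (simp add: pj_def div_less_iff_less_mult)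
    have lhs: "apply_layer (W3, Th3, r * D) (M i) ! j = (bdot (W3 j) (M i) \<ge> 3)"
      using j by (simp add: apply_layer_def threshold_fn_def Th3_def del: upt_Suc)
    have bsplit: "bdot (W3 j) (M i) = (\<Sum>m<r. W3 j m * bit (m = P)) + (\<Sum>k<r. W3 j (r+k) * bit (k \<le> s))"
      by (simp add: M_def bdot_append bdot_map P_def s_def)
    have sm1: "W3 j m * bit (m = P) = (if m = pj then 2 * bit (pj = P) else 0)" if "m < r" for m
      using that by (simp add: W3_def pj_def)
    have f1: "(\<Sum>m<r. W3 j m * bit (m = P)) = 2 * bit (pj = P)"
      using sum.cong[OF refl sm1, of "{..<r}"] pjL by (simp add: sum.delta)
    have sm2: "W3 j (r+k) * bit (k \<le> s) = (if k \<le> s then c pj k d - (if k=0 then 0 else c pj (k-1) d) else 0)" for k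
      by (simp add: W3_def pj_def d_def bit_def)
    have f2: "(\<Sum>k<r. W3 j (r+k) * bit (k \<le> s)) = c pj s d"
      unfolding sm2 sum_le_filter[OF sL] by (rule tel2)
    have "bdot (W3 j) (M i) = 2 * bit (pj = P) + c pj s d" using bsplit f1 f2 by simp
    moreover have "P * r + s = i" by (simp add: P_def s_def)
    moreover have "H i ! j = (pj = P \<and> xs i ! d)" using j by (simp add: H_def pj_def d_def P_def)
    ultimately show "apply_layer (W3, Th3, r * D) (M i) ! j = H i ! j"
      using lhs by (auto simp: c_def bit_def)
  qed
  have L4: "apply_layer (W4, Th4, D) (H i) = xs i" if "i < n" for i
  proof (rule nth_equalityI)
    show "length (apply_layer (W4, Th4, D) (H i)) = length (xs i)"
      using that assms(4) by (simp add: apply_layer_def)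
    fix d assume "d < length (apply_layer (W4, Th4, D) (H i))"
    then have d: "d < D" by (simp add: apply_layer_def)
    define P where "P = i div r"
    have PL: "P < r" using iP[OF that] by (simp add: P_def)
    have lhs: "apply_layer (W4, Th4, D) (H i) ! d = (bdot (W4 d) (H i) \<ge> 1)"
      using d by (simp add: apply_layer_def threshold_fn_def Th4_def del: upt_Suc)
    have key: "(j mod D = d \<and> j div D = P) = (j = P * D + d)" for j
    proof
      assume "j mod D = d \<and> j div D = P"
      then show "j = P * D + d" using div_mult_mod_eq[of j D] by simp
    next
      assume "j = P * D + d"
      then show "j mod D = d \<and> j div D = P" using d by simp
    qed
    have sm: "W4 d j * bit (j div D = P \<and> xs i ! (j mod D)) = (if j = P * D + d then bit (xs i ! d) else 0)" for j
      using key[of j] by (auto simp: W4_def bit_def)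
    have lt: "P * D + d < r * D"
    proof -
      have "P * D + d < Suc P * D" using d by simp
      also have "\<dots> \<le> r * D" using PL by (intro mult_right_mono) auto
      finally show ?thesis .
    qed
    have "bdot (W4 d) (H i) = bit (xs i ! d)"
      unfolding H_def bdot_map P_def[symmetric] sm using lt by (simp add: sum.delta)
    then show "apply_layer (W4, Th4, D) (H i) ! d = xs i ! d"
      using lhs by (simp add: bit_def)
  qed
  show ?thesis
  proof (intro exI conjI)
    show "map layer_size [(W1,Th1,r+D),(W2,Th2,2*r),(W3,Th3,r*D),(W4,Th4,D)] = [r + D, 2 * r, r * D, D]"
      by (simp add: layer_size_def)
    show "perfect_autoencoder [(W1,Th1,r+D),(W2,Th2,2*r),(W3,Th3,r*D),(W4,Th4,D)] 3 (xs ` {..<n})"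
      unfolding perfect_autoencoder_def
    proof
      fix x assume "x \<in> xs ` {..<n}"
      then obtain i where i: "i < n" and x: "x = xs i" by auto
      have "encoder [(W1,Th1,r+D),(W2,Th2,2*r),(W3,Th3,r*D),(W4,Th4,D)] 3 x = M i"
        unfolding encoder_def net_eval_def x by (simp add: L1[OF i] L2[OF i])
      moreover have "decoder [(W1,Th1,r+D),(W2,Th2,2*r),(W3,Th3,r*D),(W4,Th4,D)] 3 (M i) = x"
        unfolding decoder_def net_eval_def x by (simp add: L3[OF i] L4[OF i])
      ultimately show "decoder [(W1,Th1,r+D),(W2,Th2,2*r),(W3,Th3,r*D),(W4,Th4,D)] 3
          (encoder [(W1,Th1,r+D),(W2,Th2,2*r),(W3,Th3,r*D),(W4,Th4,D)] 3 x) = x" by simp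
    qed
  qed
qed

end
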